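(* Let $n\ge1$ be an integer, $\alpha\ge0$, and let $p(x)=\sum_{j=k}^m c_jx^j$ be a real polynomial with $m\ge k\ge1$ and $c_m,c_k>0$. Define $$f_\alpha(t):=\int_0^\infty x^\alpha e^{-tx^n}\,dx,\qquad g(t):=\int_0^\infty e^{-tp(x)}\,dx.$$ Then there exist constants $C,t_0>0$ depending only on $\alpha$, $n$, $k$ and the coefficients of $p$ such that $$\frac{f_\alpha(t)}{g(t)}\le C\,t^{\frac1k-\frac{\alpha+1}{n}}\qquad\text{for all } t\ge t_0.$$ *)

theory Defs
  imports "HOL-Analysis.Analysis" "HOL-Computational_Algebra.Polynomial"
begin

definition f_alpha :: "real \<Rightarrow> nat \<Rightarrow> real \<Rightarrow> real" where
  "f_alpha \<alpha> n t = (LBINT x:{0<..}. x powr \<alpha> * exp (- t * x ^ n))"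

definition g_poly :: "real poly \<Rightarrow> real \<Rightarrow> real" where
  "g_poly p t = (LBINT x:{0<..}. exp (- t * poly p x))"

end

theory Submission
  imports Defs
begin
lemma f_scale:
  assumes t: "t > 0" and n: "n \<ge> 1"
  shows "f_alpha \<alpha> n t = t powr (-(\<alpha>+1)/n) * f_alpha \<alpha> n 1"
proof -
  define c where "c = t powr (-1/n)"
  have c0: "c > 0" using t by (simp add: c_def)
  have cn: "t * c ^ n = 1"
  proof -
    have "c ^ n = t powr (-1/n * n)" unfolding c_def using t by (simp add: powr_realpow[symmetric] powr_powr)
    also have "\<dots> = t powr (-1)" using n by simp
    finally show ?thesis using t by (simp add: powr_minus field_simps)
  qed
  have cpow: "c * c powr \<alpha> = t powr (-(\<alpha>+1)/n)"
  proof -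
    have e: "- (1 / real n) - \<alpha> / real n = (- \<alpha> - 1) / real n" by (simp add: diff_divide_distrib)
    show ?thesis
      unfolding c_def using t by (simp add: powr_powr powr_mult_base[symmetric] powr_add[symmetric] e)
  qed
  have "f_alpha \<alpha> n t = (\<integral>x. indicator {0<..} x *\<^sub>R (x powr \<alpha> * exp (- t * x ^ n)) \<partial>lborel)"
    by (simp add: f_alpha_def set_lebesgue_integral_def)
  also have "\<dots> = \<bar>c\<bar> *\<^sub>R (\<integral>x. indicator {0<..} (0 + c * x) *\<^sub>R ((0 + c*x) powr \<alpha> * exp (- t * (0 + c*x) ^ n)) \<partial>lborel)"
    by (rule lborel_integral_real_affine) (use c0 in auto)
  also have "(\<lambda>x. indicator {0<..} (0 + c * x) *\<^sub>R ((0 + c*x) powr \<alpha> * exp (- t * (0 + c*x) ^ n)))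
     = (\<lambda>x. c powr \<alpha> * (indicator {0<..} x *\<^sub>R (x powr \<alpha> * exp (- 1 * x ^ n))))"
  proof
    fix x
    show "indicator {0<..} (0 + c * x) *\<^sub>R ((0 + c*x) powr \<alpha> * exp (- t * (0 + c*x) ^ n))
       = c powr \<alpha> * (indicator {0<..} x *\<^sub>R (x powr \<alpha> * exp (- 1 * x ^ n)))"
    proof (cases "x > 0")
      case True
      have "t * (c*x)^n = x ^ n" using cn by (simp add: power_mult_distrib)
      then show ?thesis using True c0 by (simp add: powr_mult indicator_def zero_less_mult_iff)
    next
      case False
      then show ?thesis using c0 by (simp add: indicator_def zero_less_mult_iff)
    qed
  qed
  also have "\<bar>c\<bar> *\<^sub>R (\<integral>x. c powr \<alpha> * (indicator {0<..} x *\<^sub>R (x powr \<alpha> * exp (- 1 * x ^ n))) \<partial>lborel)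
     = (c * c powr \<alpha>) * f_alpha \<alpha> n 1"
    using c0 by (simp add: f_alpha_def set_lebesgue_integral_def)
  finally show ?thesis using cpow by simp
qed

lemma f_nonneg: "f_alpha \<alpha> n t \<ge> 0"
  unfolding f_alpha_def set_lebesgue_integral_def
  by (rule Bochner_Integration.integral_nonneg) (auto simp: indicator_def)

lemma poly_bound:
  fixes p :: "real poly"
  assumes "\<forall>j<k. coeff p j = 0" "0 \<le> x" "x \<le> 1"
  shows "poly p x \<le> (\<Sum>j\<le>degree p. \<bar>coeff p j\<bar>) * x ^ k"
proof -
  have "poly p x = (\<Sum>j\<le>degree p. coeff p j * x ^ j)" by (simp add: poly_altdef)
  also have "\<dots> \<le> (\<Sum>j\<le>degree p. \<bar>coeff p j\<bar> * x ^ k)"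
  proof (rule sum_mono)
    fix j assume "j \<in> {..degree p}"
    show "coeff p j * x ^ j \<le> \<bar>coeff p j\<bar> * x ^ k"
    proof (cases "j < k")
      case True then show ?thesis using assms by simp
    next
      case False
      then have "x ^ j \<le> x ^ k" using assms by (simp add: power_decreasing)
      moreover have "coeff p j * x ^ j \<le> \<bar>coeff p j\<bar> * x ^ j" using assms
        by (simp add: mult_right_mono)
      ultimately show ?thesis by (meson abs_ge_zero mult_left_mono order_trans)
    qed
  qed
  finally show ?thesis by (simp add: sum_distrib_right)
qed

lemma g_lower:
  fixes p :: "real poly" and k :: nat
  assumes k: "k \<ge> 1" and z: "\<forall>j<k. coeff p j = 0" and t: "t \<ge> 1"
    and int: "set_integrable lborel {0<..} (\<lambda>x. exp (- t * poly p x))"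
  defines "A \<equiv> (\<Sum>j\<le>degree p. \<bar>coeff p j\<bar>)"
  shows "g_poly p t \<ge> t powr (-1/real k) * exp (-A)"
proof -
  define d where "d = t powr (-1/real k)"
  have d0: "d > 0" using t by (simp add: d_def)
  have d1: "d \<le> 1"
  proof -
    have "t powr (1/real k) \<ge> 1" using t by (simp add: ge_one_powr_ge_zero)
    then show ?thesis unfolding d_def using t by (simp add: powr_minus_divide divide_simps)
  qed
  have dk: "t * d ^ k = 1"
  proof -
    have "d ^ k = t powr (-1/real k * k)" unfolding d_def using t by (simp add: powr_realpow[symmetric] powr_powr)
    also have "\<dots> = t powr (-1)" using k by simp
    finally show ?thesis using t by (simp add: powr_minus field_simps)
  qed
  have A0: "A \<ge> 0" unfolding A_def by (simp add: sum_nonneg)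
  have pt: "indicator {0<..d} x * exp (-A) \<le> indicator {0<..} x * exp (- t * poly p x)" for x
  proof (cases "0 < x \<and> x \<le> d")
    case True
    have "poly p x \<le> A * x ^ k" unfolding A_def using poly_bound[OF z, of x] True d1 by simp
    then have "t * poly p x \<le> t * (A * x ^ k)" using t by (simp add: mult_left_mono)
    also have "\<dots> = A * (t * x ^ k)" by simp
    also have "\<dots> \<le> A * (t * d ^ k)" using True t A0
      by (intro mult_left_mono power_mono) auto
    finally have "t * poly p x \<le> A" using dk by simp
    then show ?thesis using True by (simp add: indicator_def)
  next
    case False
    then show ?thesis by (auto simp: indicator_def)
  qed
  have "d * exp (-A) = (\<integral>x. indicator {0<..d} x * exp (-A) \<partial>lborel)"
    using d0 by simp
  also have "\<dots> \<le> (\<integral>x. indicator {0<..} x * exp (- t * poly p x) \<partial>lborel)"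
  proof (rule integral_mono)
    show "integrable lborel (\<lambda>x. indicator {0<..d} x * exp (-A))"
      using d0 by (intro integrable_mult_left integrable_real_indicator) (auto simp: emeasure_lborel_Ioc)
    show "integrable lborel (\<lambda>x. indicator {0<..} x * exp (- t * poly p x))"
      using int by (simp add: set_integrable_def)
  qed (rule pt)
  also have "\<dots> = g_poly p t" by (simp add: g_poly_def set_lebesgue_integral_def)
  finally show ?thesis by (simp add: d_def)
qed

theorem lemma4p12:
  fixes n k m :: nat and \<alpha> :: real and p :: "real poly"
  assumes "n \<ge> 1" and "\<alpha> \<ge> 0"
    and "1 \<le> k" and "k \<le> m"
    and "degree p = m"
    and "\<forall>j<k. coeff p j = 0"
    and "coeff p m > 0" and "coeff p k > 0"
  shows "\<exists>C t0. C > 0 \<and> t0 > 0 \<and>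
           (\<forall>t\<ge>t0. f_alpha \<alpha> n t / g_poly p t
                     \<le> C * t powr (1 / real k - (\<alpha> + 1) / real n))"
proof -
  define A where "A = (\<Sum>j\<le>degree p. \<bar>coeff p j\<bar>)"
  define F where "F = f_alpha \<alpha> n 1"
  have F0: "F \<ge> 0" unfolding F_def by (rule f_nonneg)
  have "\<forall>t\<ge>1. f_alpha \<alpha> n t / g_poly p t
                     \<le> ((F + 1) * exp A) * t powr (1 / real k - (\<alpha> + 1) / real n)"
  proof (intro allI impI)
    fix t :: real assume t: "t \<ge> 1"
    have fe: "f_alpha \<alpha> n t = t powr (-(\<alpha>+1)/n) * F"
      unfolding F_def using f_scale[of t n \<alpha>] t assms(1) by simp
    have fn: "f_alpha \<alpha> n t \<ge> 0" by (rule f_nonneg)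
    have pos: "0 < ((F + 1) * exp A) * t powr (1 / real k - (\<alpha> + 1) / real n)"
      using F0 t by simp
    show "f_alpha \<alpha> n t / g_poly p t
                     \<le> ((F + 1) * exp A) * t powr (1 / real k - (\<alpha> + 1) / real n)"
    proof (cases "set_integrable lborel {0<..} (\<lambda>x. exp (- t * poly p x))")
      case True
      define L where "L = t powr (-1/real k) * exp (-A)"
      have L0: "L > 0" using t by (simp add: L_def)
      have gL: "g_poly p t \<ge> L" unfolding L_def A_def
        by (rule g_lower[OF assms(3) assms(6) t True])
      have "f_alpha \<alpha> n t / g_poly p t \<le> f_alpha \<alpha> n t / L"
        using fn L0 gL by (intro divide_left_mono) auto
      also have "\<dots> = F * exp A * (t powr (-(\<alpha>+1)/n) * t powr (1/real k))"
        unfolding L_def fe using t by (simp add: powr_minus_divide exp_minus field_simps)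
      also have "t powr (-(\<alpha>+1)/n) * t powr (1/real k) = t powr (1 / real k - (\<alpha> + 1) / real n)"
      proof -
        have "(- \<alpha> - 1) / real n + 1 / real k = 1 / real k - (\<alpha> + 1) / real n"
          by (simp add: diff_divide_distrib add_divide_distrib)
        then show ?thesis using t by (simp add: powr_add[symmetric])
      qed
      also have "F * exp A * t powr (1 / real k - (\<alpha> + 1) / real n)
          \<le> ((F + 1) * exp A) * t powr (1 / real k - (\<alpha> + 1) / real n)"
        by (intro mult_right_mono) auto
      finally show ?thesis .
    next
      case False
      then have "g_poly p t = 0"
        unfolding g_poly_def set_lebesgue_integral_def set_integrable_def
        by (simp add: not_integrable_integral_eq)
      then show ?thesis using pos by simp
    qed
  qed
  moreover have "(F + 1) * exp A > 0" using F0 by simp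
  ultimately show ?thesis by (intro exI[of _ "(F + 1) * exp A"] exI[of _ 1]) auto
qed

end
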